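(* Let $Q$ be a multiplicative equivariantly supported based quantal frame with base locale $A$ and support $\varsigma$. Consider the localic graph with $\mathcal O(G_0)=A$, $\mathcal O(G_1)=Q$, $d:G_1\to G_0$ given by $d^*(a)=a\triangleright 1_Q$, $i:G_1\to G_1$ given by $i^*(x)=x^*$, $r=d\circ i$, $G_2$ the pullback of $r$ and $d$ (so $\mathcal O(G_2)=Q\otimes_A Q$, with projections $\pi_1,\pi_2:G_2\to G_1$ satisfying $r\circ\pi_1=d\circ\pi_2$), and $m:G_2\to G_1$ defined by $m^*(a)=\bigvee_{xy\le a}x\otimes y$. Then $G$ is an involutive open semicategory (in particular $d\circ m=d\circ\pi_1$ and $r\circ m=r\circ\pi_2$, $m$ is associative, $i$ is an involution for $m$, and $d$ is open).
   Context: For a locale $A$, an $A$-$A$-bimodule is a sup-lattice $M$ with actions $a\triangleright m$, $m\triangleleft a$ preserving joins in each variable, with $1_A\triangleright m=m$, $(a\wedge b)\triangleright m=a\triangleright(b\triangleright m)$, $m\triangleleft1_A=m$, $m\triangleleft(a\wedge b)=(m\triangleleft a)\triangleleft b$, $(a\triangleright m)\triangleleft b=a\triangleright(m\triangleleft b)$. An $A$-$A$-quantale is such a $Q$ with associative join-preserving multiplication and $(a\triangleright x)y=a\triangleright(xy)$, $(x\triangleleft a)y=x(a\triangleright y)$, $(xy)\triangleleft a=x(y\triangleleft a)$; involutive if there is a join-preserving $x\mapsto x^*$ with $x^{**}=x$, $(xy)^*=y^*x^*$, $(a\triangleright(x\triangleleft b))^*=b\triangleright(x^*\triangleleft a)$.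 $1_Q$ is the top. A support is a join-preserving $\varsigma:Q\to A$ with $\varsigma(1_Q)=1_A$, $\varsigma(x)\triangleright y\le xx^*y$, $\varsigma(x)\triangleright x=x$; equivariant if $\varsigma(a\triangleright x)=a\wedge\varsigma(x)$. A based quantal frame is an involutive $A$-$A$-quantale which is a frame with $(a\triangleright x)\wedge y=a\triangleright(x\wedge y)$, $(x\triangleleft a)\wedge y=(x\wedge y)\triangleleft a$. $Q\otimes_AQ$ is the quotient of the sup-lattice tensor product $Q\otimes Q$ by $x\otimes(a\triangleright y)=(x\triangleleft a)\otimes y$; the multiplication induces $\mu_A:Q\otimes_AQ\to Q$, and $Q$ is multiplicative if the right adjoint of $\mu_A$ preserves arbitrary joins. An involutive open semicategory is an internal category without units in locales (associative composition $m$ with $d\circ m=d\circ\pi_1$, $r\circ m=r\circ\pi_2$), equipped with an involution $i$ ($i\circ i=\mathrm{id}$, $d\circ i=r$) that reverses composition, and with $d$ an open map. *)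

theory Defs
  imports Main
begin

definition frame_law :: "'a::complete_lattice itself \<Rightarrow> bool" where
  "frame_law _ \<longleftrightarrow> (\<forall>(x::'a) S. inf x (Sup S) = (SUP s\<in>S. inf x s))"

definition frame_hom :: "('a::complete_lattice \<Rightarrow> 'b::complete_lattice) \<Rightarrow> bool" where
  "frame_hom f \<longleftrightarrow> (\<forall>S. f (Sup S) = Sup (f ` S)) \<and> (\<forall>x y. f (inf x y) = inf (f x) (f y)) \<and> f top = top"

text \<open>A locale map is open iff its inverse image map has a left adjoint satisfying
  Frobenius reciprocity (Joyal--Tierney).\<close>
definition open_frame_hom :: "('a::complete_lattice \<Rightarrow> 'b::complete_lattice) \<Rightarrow> bool" where
  "open_frame_hom f \<longleftrightarrow> (\<exists>g. (\<forall>x a. g x \<le> a \<longleftrightarrow> x \<le> f a) \<and> (\<forall>x a. g (inf x (f a)) = inf (g x) a))"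

definition bimodule ::
  "('a::complete_lattice \<Rightarrow> 'q::complete_lattice \<Rightarrow> 'q) \<Rightarrow> ('q \<Rightarrow> 'a \<Rightarrow> 'q) \<Rightarrow> bool" where
  "bimodule lact ract \<longleftrightarrow>
     (\<forall>S m. lact (Sup S) m = (SUP a\<in>S. lact a m)) \<and>
     (\<forall>a M. lact a (Sup M) = (SUP m\<in>M. lact a m)) \<and>
     (\<forall>M a. ract (Sup M) a = (SUP m\<in>M. ract m a)) \<and>
     (\<forall>m S. ract m (Sup S) = (SUP a\<in>S. ract m a)) \<and>
     (\<forall>m. lact top m = m) \<and>
     (\<forall>a b m. lact (inf a b) m = lact a (lact b m)) \<and>
     (\<forall>m. ract m top = m) \<and>
     (\<forall>a b m. ract m (inf a b) = ract (ract m a) b) \<and>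
     (\<forall>a b m. ract (lact a m) b = lact a (ract m b))"

definition AA_quantale ::
  "('a::complete_lattice \<Rightarrow> 'q::complete_lattice \<Rightarrow> 'q) \<Rightarrow> ('q \<Rightarrow> 'a \<Rightarrow> 'q) \<Rightarrow> ('q \<Rightarrow> 'q \<Rightarrow> 'q) \<Rightarrow> bool" where
  "AA_quantale lact ract mult \<longleftrightarrow>
     bimodule lact ract \<and>
     (\<forall>x y z. mult (mult x y) z = mult x (mult y z)) \<and>
     (\<forall>X y. mult (Sup X) y = (SUP x\<in>X. mult x y)) \<and>
     (\<forall>x Y. mult x (Sup Y) = (SUP y\<in>Y. mult x y)) \<and>
     (\<forall>a x y. mult (lact a x) y = lact a (mult x y)) \<and>
     (\<forall>a x y. mult (ract x a) y = mult x (lact a y)) \<and>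
     (\<forall>a x y. ract (mult x y) a = mult x (ract y a))"

definition involutive_AA_quantale ::
  "('a::complete_lattice \<Rightarrow> 'q::complete_lattice \<Rightarrow> 'q) \<Rightarrow> ('q \<Rightarrow> 'a \<Rightarrow> 'q) \<Rightarrow> ('q \<Rightarrow> 'q \<Rightarrow> 'q)
     \<Rightarrow> ('q \<Rightarrow> 'q) \<Rightarrow> bool" where
  "involutive_AA_quantale lact ract mult star \<longleftrightarrow>
     AA_quantale lact ract mult \<and>
     (\<forall>X. star (Sup X) = (SUP x\<in>X. star x)) \<and>
     (\<forall>x. star (star x) = x) \<and>
     (\<forall>x y. star (mult x y) = mult (star y) (star x)) \<and>
     (\<forall>a b x. star (lact a (ract x b)) = lact b (ract (star x) a))"

definition based_quantal_frame ::
  "('a::complete_lattice \<Rightarrow> 'q::complete_lattice \<Rightarrow> 'q) \<Rightarrow> ('q \<Rightarrow> 'a \<Rightarrow> 'q) \<Rightarrow> ('q \<Rightarrow> 'q \<Rightarrow> 'q)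
     \<Rightarrow> ('q \<Rightarrow> 'q) \<Rightarrow> bool" where
  "based_quantal_frame lact ract mult star \<longleftrightarrow>
     frame_law TYPE('a) \<and> frame_law TYPE('q) \<and>
     involutive_AA_quantale lact ract mult star \<and>
     (\<forall>a x y. inf (lact a x) y = lact a (inf x y)) \<and>
     (\<forall>a x y. inf (ract x a) y = ract (inf x y) a)"

definition support ::
  "('a::complete_lattice \<Rightarrow> 'q::complete_lattice \<Rightarrow> 'q) \<Rightarrow> ('q \<Rightarrow> 'q \<Rightarrow> 'q) \<Rightarrow> ('q \<Rightarrow> 'q)
     \<Rightarrow> ('q \<Rightarrow> 'a) \<Rightarrow> bool" where
  "support lact mult star supp \<longleftrightarrow>
     (\<forall>X. supp (Sup X) = (SUP x\<in>X. supp x)) \<and>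
     supp top = top \<and>
     (\<forall>x y. lact (supp x) y \<le> mult (mult x (star x)) y) \<and>
     (\<forall>x. lact (supp x) x = x)"

definition equivariant_support ::
  "('a::complete_lattice \<Rightarrow> 'q::complete_lattice \<Rightarrow> 'q) \<Rightarrow> ('q \<Rightarrow> 'q \<Rightarrow> 'q) \<Rightarrow> ('q \<Rightarrow> 'q)
     \<Rightarrow> ('q \<Rightarrow> 'a) \<Rightarrow> bool" where
  "equivariant_support lact mult star supp \<longleftrightarrow>
     support lact mult star supp \<and> (\<forall>a x. supp (lact a x) = inf a (supp x))"

text \<open>Joyal--Tierney representation: elements of the sup-lattice tensor product
  Q \<otimes> Q are the subsets S of Q \<times> Q that are down-closed and closed under joins
  (including empty joins) in each variable; S corresponds to the join of the x \<otimes> y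
  with (x,y) \<in> S, and x \<otimes> y \<le> S iff (x,y) \<in> S.  The quotient by the relations
  x \<otimes> (a \<triangleright> y) = (x \<triangleleft> a) \<otimes> y is the meet-closed subset of those S with
  (x, a \<triangleright> y) \<in> S \<longleftrightarrow> (x \<triangleleft> a, y) \<in> S.  Order is inclusion, meets are intersections.\<close>

definition tensA_closed ::
  "('a \<Rightarrow> 'q::complete_lattice \<Rightarrow> 'q) \<Rightarrow> ('q \<Rightarrow> 'a \<Rightarrow> 'q) \<Rightarrow> ('q \<times> 'q) set \<Rightarrow> bool" where
  "tensA_closed lact ract S \<longleftrightarrow>
     (\<forall>x y x' y'. (x, y) \<in> S \<longrightarrow> x' \<le> x \<longrightarrow> y' \<le> y \<longrightarrow> (x', y') \<in> S) \<and>
     (\<forall>X y. (\<forall>x\<in>X. (x, y) \<in> S) \<longrightarrow> (Sup X, y) \<in> S) \<and>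
     (\<forall>x Y. (\<forall>y\<in>Y. (x, y) \<in> S) \<longrightarrow> (x, Sup Y) \<in> S) \<and>
     (\<forall>x y a. (x, lact a y) \<in> S \<longleftrightarrow> (ract x a, y) \<in> S)"

definition tjoin ::
  "('a \<Rightarrow> 'q::complete_lattice \<Rightarrow> 'q) \<Rightarrow> ('q \<Rightarrow> 'a \<Rightarrow> 'q) \<Rightarrow> ('q \<times> 'q) set set \<Rightarrow> ('q \<times> 'q) set" where
  "tjoin lact ract F = \<Inter>{S. tensA_closed lact ract S \<and> \<Union>F \<subseteq> S}"

definition tens ::
  "('a \<Rightarrow> 'q::complete_lattice \<Rightarrow> 'q) \<Rightarrow> ('q \<Rightarrow> 'a \<Rightarrow> 'q) \<Rightarrow> 'q \<Rightarrow> 'q \<Rightarrow> ('q \<times> 'q) set" where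
  "tens lact ract x y = tjoin lact ract {{(x, y)}}"

definition tensA3_closed ::
  "('a \<Rightarrow> 'q::complete_lattice \<Rightarrow> 'q) \<Rightarrow> ('q \<Rightarrow> 'a \<Rightarrow> 'q) \<Rightarrow> ('q \<times> 'q \<times> 'q) set \<Rightarrow> bool" where
  "tensA3_closed lact ract S \<longleftrightarrow>
     (\<forall>x y z x' y' z'. (x, y, z) \<in> S \<longrightarrow> x' \<le> x \<longrightarrow> y' \<le> y \<longrightarrow> z' \<le> z \<longrightarrow> (x', y', z') \<in> S) \<and>
     (\<forall>X y z. (\<forall>x\<in>X. (x, y, z) \<in> S) \<longrightarrow> (Sup X, y, z) \<in> S) \<and>
     (\<forall>x Y z. (\<forall>y\<in>Y. (x, y, z) \<in> S) \<longrightarrow> (x, Sup Y, z) \<in> S) \<and>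
     (\<forall>x y Z. (\<forall>z\<in>Z. (x, y, z) \<in> S) \<longrightarrow> (x, y, Sup Z) \<in> S) \<and>
     (\<forall>x y z a. (x, lact a y, z) \<in> S \<longleftrightarrow> (ract x a, y, z) \<in> S) \<and>
     (\<forall>x y z a. (x, y, lact a z) \<in> S \<longleftrightarrow> (x, ract y a, z) \<in> S)"

definition tjoin3 ::
  "('a \<Rightarrow> 'q::complete_lattice \<Rightarrow> 'q) \<Rightarrow> ('q \<Rightarrow> 'a \<Rightarrow> 'q) \<Rightarrow> ('q \<times> 'q \<times> 'q) set set \<Rightarrow> ('q \<times> 'q \<times> 'q) set" where
  "tjoin3 lact ract F = \<Inter>{S. tensA3_closed lact ract S \<and> \<Union>F \<subseteq> S}"

definition tens3 ::
  "('a \<Rightarrow> 'q::complete_lattice \<Rightarrow> 'q) \<Rightarrow> ('q \<Rightarrow> 'a \<Rightarrow> 'q) \<Rightarrow> 'q \<Rightarrow> 'q \<Rightarrow> 'q \<Rightarrow> ('q \<times> 'q \<times> 'q) set" where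
  "tens3 lact ract x y z = tjoin3 lact ract {{(x, y, z)}}"

definition muA :: "('q::complete_lattice \<Rightarrow> 'q \<Rightarrow> 'q) \<Rightarrow> ('q \<times> 'q) set \<Rightarrow> 'q" where
  "muA mult S = Sup {mult x y | x y. (x, y) \<in> S}"

definition muA_radj ::
  "('a \<Rightarrow> 'q::complete_lattice \<Rightarrow> 'q) \<Rightarrow> ('q \<Rightarrow> 'a \<Rightarrow> 'q) \<Rightarrow> ('q \<Rightarrow> 'q \<Rightarrow> 'q) \<Rightarrow> 'q \<Rightarrow> ('q \<times> 'q) set" where
  "muA_radj lact ract mult a = tjoin lact ract {S. tensA_closed lact ract S \<and> muA mult S \<le> a}"

definition multiplicative ::
  "('a \<Rightarrow> 'q::complete_lattice \<Rightarrow> 'q) \<Rightarrow> ('q \<Rightarrow> 'a \<Rightarrow> 'q) \<Rightarrow> ('q \<Rightarrow> 'q \<Rightarrow> 'q) \<Rightarrow> bool" where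
  "multiplicative lact ract mult \<longleftrightarrow>
     (\<forall>F. muA_radj lact ract mult (Sup F) = tjoin lact ract (muA_radj lact ract mult ` F))"

definition d_star :: "('a \<Rightarrow> 'q::complete_lattice \<Rightarrow> 'q) \<Rightarrow> 'a \<Rightarrow> 'q" where
  "d_star lact a = lact a top"

definition r_star :: "('a \<Rightarrow> 'q::complete_lattice \<Rightarrow> 'q) \<Rightarrow> ('q \<Rightarrow> 'q) \<Rightarrow> 'a \<Rightarrow> 'q" where
  "r_star lact star = star \<circ> d_star lact"

definition pi1_star ::
  "('a \<Rightarrow> 'q::complete_lattice \<Rightarrow> 'q) \<Rightarrow> ('q \<Rightarrow> 'a \<Rightarrow> 'q) \<Rightarrow> 'q \<Rightarrow> ('q \<times> 'q) set" where
  "pi1_star lact ract x = tens lact ract x top"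

definition pi2_star ::
  "('a \<Rightarrow> 'q::complete_lattice \<Rightarrow> 'q) \<Rightarrow> ('q \<Rightarrow> 'a \<Rightarrow> 'q) \<Rightarrow> 'q \<Rightarrow> ('q \<times> 'q) set" where
  "pi2_star lact ract y = tens lact ract top y"

definition m_star ::
  "('a \<Rightarrow> 'q::complete_lattice \<Rightarrow> 'q) \<Rightarrow> ('q \<Rightarrow> 'a \<Rightarrow> 'q) \<Rightarrow> ('q \<Rightarrow> 'q \<Rightarrow> 'q) \<Rightarrow> 'q \<Rightarrow> ('q \<times> 'q) set" where
  "m_star lact ract mult a = tjoin lact ract {tens lact ract x y | x y. mult x y \<le> a}"

text \<open>(m \<times>_{G_0} id)^* = m^* \<otimes> id : Q \<otimes>_A Q \<rightarrow> Q \<otimes>_A Q \<otimes>_A Q, determined by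
  x \<otimes> y \<mapsto> m^*(x) \<otimes> y = \<Or>_{uv \<le> x} u \<otimes> v \<otimes> y.\<close>
definition m_id_star ::
  "('a \<Rightarrow> 'q::complete_lattice \<Rightarrow> 'q) \<Rightarrow> ('q \<Rightarrow> 'a \<Rightarrow> 'q) \<Rightarrow> ('q \<Rightarrow> 'q \<Rightarrow> 'q)
     \<Rightarrow> ('q \<times> 'q) set \<Rightarrow> ('q \<times> 'q \<times> 'q) set" where
  "m_id_star lact ract mult S =
     tjoin3 lact ract {tens3 lact ract u v y | u v y. \<exists>x. (x, y) \<in> S \<and> mult u v \<le> x}"

definition id_m_star ::
  "('a \<Rightarrow> 'q::complete_lattice \<Rightarrow> 'q) \<Rightarrow> ('q \<Rightarrow> 'a \<Rightarrow> 'q) \<Rightarrow> ('q \<Rightarrow> 'q \<Rightarrow> 'q)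
     \<Rightarrow> ('q \<times> 'q) set \<Rightarrow> ('q \<times> 'q \<times> 'q) set" where
  "id_m_star lact ract mult S =
     tjoin3 lact ract {tens3 lact ract x u v | x u v. \<exists>y. (x, y) \<in> S \<and> mult u v \<le> y}"

text \<open>\<langle>i \<circ> \<pi>_2, i \<circ> \<pi>_1\<rangle>^* : Q \<otimes>_A Q \<rightarrow> Q \<otimes>_A Q, x \<otimes> y \<mapsto> y^* \<otimes> x^*.\<close>
definition twist_star ::
  "('a \<Rightarrow> 'q::complete_lattice \<Rightarrow> 'q) \<Rightarrow> ('q \<Rightarrow> 'a \<Rightarrow> 'q) \<Rightarrow> ('q \<Rightarrow> 'q)
     \<Rightarrow> ('q \<times> 'q) set \<Rightarrow> ('q \<times> 'q) set" where
  "twist_star lact ract star S = tjoin lact ract {tens lact ract (star y) (star x) | x y. (x, y) \<in> S}"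

end

theory Submission
  imports Defs
begin

locale BQF =
  fixes lact :: "'a::complete_lattice \<Rightarrow> 'q::complete_lattice \<Rightarrow> 'q"
    and ract :: "'q \<Rightarrow> 'a \<Rightarrow> 'q"
    and mult :: "'q \<Rightarrow> 'q \<Rightarrow> 'q"
    and star :: "'q \<Rightarrow> 'q"
    and supp :: "'q \<Rightarrow> 'a"
  assumes bqf: "based_quantal_frame lact ract mult star"
    and eq_supp: "equivariant_support lact mult star supp"
begin

lemma ax:
  "\<And>S m. lact (Sup S) m = (SUP a\<in>S. lact a m)"
  "\<And>a M. lact a (Sup M) = (SUP m\<in>M. lact a m)"
  "\<And>m. lact top m = m"
  "\<And>a b m. lact (inf a b) m = lact a (lact b m)"
  "\<And>x y z. mult (mult x y) z = mult x (mult y z)"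
  "\<And>X y. mult (Sup X) y = (SUP x\<in>X. mult x y)"
  "\<And>x Y. mult x (Sup Y) = (SUP y\<in>Y. mult x y)"
  "\<And>a x y. mult (lact a x) y = lact a (mult x y)"
  "\<And>a x y. mult (ract x a) y = mult x (lact a y)"
  "\<And>a x y. ract (mult x y) a = mult x (ract y a)"
  "\<And>X. star (Sup X) = (SUP x\<in>X. star x)"
  "\<And>x. star (star x) = x"
  "\<And>x y. star (mult x y) = mult (star y) (star x)"
  "\<And>a b x. star (lact a (ract x b)) = lact b (ract (star x) a)"
  "\<And>a x y. inf (lact a x) y = lact a (inf x y)"
  "\<And>m. ract m top = m"
  "\<And>M a. ract (Sup M) a = (SUP m\<in>M. ract m a)"
  "\<And>m S. ract m (Sup S) = (SUP a\<in>S. ract m a)"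
  using bqf unfolding based_quantal_frame_def involutive_AA_quantale_def AA_quantale_def bimodule_def
  by auto

lemma sax:
  "\<And>X. supp (Sup X) = (SUP x\<in>X. supp x)"
  "supp top = top"
  "\<And>x y. lact (supp x) y \<le> mult (mult x (star x)) y"
  "\<And>x. lact (supp x) x = x"
  "\<And>a x. supp (lact a x) = inf a (supp x)"
  using eq_supp unfolding equivariant_support_def support_def by auto

lemma sup_mono_gen:
  fixes f :: "'b::complete_lattice \<Rightarrow> 'c::complete_lattice"
  assumes "\<And>X. f (Sup X) = (SUP x\<in>X. f x)" "x \<le> y"
  shows "f x \<le> f y"
proof -
  have "f y = f (Sup {x, y})" using assms(2) by (simp add: sup.absorb2)
  also have "\<dots> = sup (f x) (f y)" using assms(1)[of "{x, y}"] by simp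
  finally show ?thesis by (metis sup.cobounded1)
qed

lemma mult_mono: "x \<le> x' \<Longrightarrow> y \<le> y' \<Longrightarrow> mult x y \<le> mult x' y'"
proof -
  assume a: "x \<le> x'" "y \<le> y'"
  have "mult x y \<le> mult x' y" using sup_mono_gen[of "\<lambda>x. mult x y", OF ax(6) a(1)] .
  also have "\<dots> \<le> mult x' y'" using sup_mono_gen[of "\<lambda>y. mult x' y", OF ax(7) a(2)] .
  finally show ?thesis .
qed

lemma lact_mono: "a \<le> b \<Longrightarrow> x \<le> y \<Longrightarrow> lact a x \<le> lact b y"
proof -
  assume a: "a \<le> b" "x \<le> y"
  have "lact a x \<le> lact b x" using sup_mono_gen[of "\<lambda>a. lact a x", OF ax(1) a(1)] .
  also have "\<dots> \<le> lact b y" using sup_mono_gen[of "\<lambda>y. lact b y", OF ax(2) a(2)] .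
  finally show ?thesis .
qed

lemma star_mono: "x \<le> y \<Longrightarrow> star x \<le> star y"
  using sup_mono_gen[of star, OF ax(11)] .

lemma supp_mono: "x \<le> y \<Longrightarrow> supp x \<le> supp y"
  using sup_mono_gen[of supp, OF sax(1)] .

lemma star_top: "star top = top"
  by (metis ax(12) star_mono top.extremum top.extremum_uniqueI)

lemma star_ract: "star (ract x b) = lact b (star x)"
  using ax(14)[of top x b] by (simp add: ax(3) ax(16))

lemma star_lact: "star (lact a x) = ract (star x) a"
  by (metis ax(12) star_ract)

lemma star_le_iff: "star x \<le> y \<longleftrightarrow> x \<le> star y"
  by (metis ax(12) star_mono)

definition D where "D a = {(x, y). mult x y \<le> a}"

lemma D_closed: "tensA_closed lact ract (D a)"
  unfolding tensA_closed_def D_def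
  apply (intro conjI allI impI)
  subgoal by (auto intro: order_trans[OF mult_mono])
  subgoal by (simp add: ax(6) SUP_le_iff)
  subgoal by (simp add: ax(7) SUP_le_iff)
  subgoal by (simp add: ax(9))
  done

lemma in_tjoin: "p \<in> tjoin lact ract F \<longleftrightarrow> (\<forall>S. tensA_closed lact ract S \<longrightarrow> \<Union>F \<subseteq> S \<longrightarrow> p \<in> S)"
  unfolding tjoin_def by auto

lemma in_tens: "p \<in> tens lact ract x y \<longleftrightarrow> (\<forall>S. tensA_closed lact ract S \<longrightarrow> (x, y) \<in> S \<longrightarrow> p \<in> S)"
  unfolding tens_def in_tjoin by auto

lemma m_star_D: "m_star lact ract mult a = D a"
proof
  show "m_star lact ract mult a \<subseteq> D a"
  proof
    fix p assume "p \<in> m_star lact ract mult a"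
    then have "\<Union>{tens lact ract x y |x y. mult x y \<le> a} \<subseteq> D a \<longrightarrow> p \<in> D a"
      unfolding m_star_def in_tjoin using D_closed by blast
    moreover have "\<Union>{tens lact ract x y |x y. mult x y \<le> a} \<subseteq> D a"
    proof
      fix q assume "q \<in> \<Union>{tens lact ract x y |x y. mult x y \<le> a}"
      then obtain x y where "q \<in> tens lact ract x y" "mult x y \<le> a" by blast
      moreover have "(x, y) \<in> D a" using calculation(2) by (simp add: D_def)
      ultimately show "q \<in> D a" using D_closed unfolding in_tens by blast
    qed
    ultimately show "p \<in> D a" by blast
  qed
next
  show "D a \<subseteq> m_star lact ract mult a"
  proof
    fix p assume p: "p \<in> D a"
    obtain x y where pe: "p = (x, y)" by force
    show "p \<in> m_star lact ract mult a"
      unfolding m_star_def in_tjoin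
    proof (intro allI impI)
      fix S assume S: "tensA_closed lact ract S" "\<Union>{tens lact ract x y |x y. mult x y \<le> a} \<subseteq> S"
      have "(x, y) \<in> tens lact ract x y" by (simp add: in_tens)
      moreover have "mult x y \<le> a" using p pe D_def by auto
      ultimately show "p \<in> S" using S pe by blast
    qed
  qed
qed

lemma ract_mono: "x \<le> y \<Longrightarrow> a \<le> b \<Longrightarrow> ract x a \<le> ract y b"
proof -
  assume h: "x \<le> y" "a \<le> b"
  have "ract x a \<le> ract y a" using sup_mono_gen[of "\<lambda>x. ract x a", OF ax(17) h(1)] .
  also have "\<dots> \<le> ract y b" using sup_mono_gen[of "\<lambda>a. ract y a", OF ax(18) h(2)] .
  finally show ?thesis .
qed

lemma closedD:
  assumes "tensA_closed lact ract S"
  shows "\<And>x y x' y'. (x, y) \<in> S \<Longrightarrow> x' \<le> x \<Longrightarrow> y' \<le> y \<Longrightarrow> (x', y') \<in> S"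
    and "\<And>x y a. (x, lact a y) \<in> S \<longleftrightarrow> (ract x a, y) \<in> S"
proof -
  show "\<And>x y x' y'. (x, y) \<in> S \<Longrightarrow> x' \<le> x \<Longrightarrow> y' \<le> y \<Longrightarrow> (x', y') \<in> S"
    using assms unfolding tensA_closed_def by metis
  show "\<And>x y a. (x, lact a y) \<in> S \<longleftrightarrow> (ract x a, y) \<in> S"
    using assms unfolding tensA_closed_def by metis
qed

lemma tens_sub_D: "mult x y \<le> a \<Longrightarrow> tens lact ract x y \<subseteq> D a"
proof
  fix p assume "mult x y \<le> a" "p \<in> tens lact ract x y"
  moreover have "(x, y) \<in> D a" using calculation(1) by (simp add: D_def)
  ultimately show "p \<in> D a" using D_closed unfolding in_tens by blast
qed


lemma dm: "m_star lact ract mult (lact a top) = tens lact ract (lact a top) top"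
proof
  have "mult (lact a top) top \<le> lact a top"
    unfolding ax(8) by (rule lact_mono) simp_all
  then show "tens lact ract (lact a top) top \<subseteq> m_star lact ract mult (lact a top)"
    using tens_sub_D m_star_D by simp
next
  show "m_star lact ract mult (lact a top) \<subseteq> tens lact ract (lact a top) top"
  proof
    fix p assume "p \<in> m_star lact ract mult (lact a top)"
    then obtain x y where pe: "p = (x, y)" and xy: "mult x y \<le> lact a top"
      by (auto simp: m_star_D D_def)
    let ?c = "supp y"
    have "ract x ?c = star (lact ?c (star x))" by (simp add: star_lact ax(12))
    also have "\<dots> \<le> star (mult (mult y (star y)) (star x))" by (rule star_mono[OF sax(3)])
    also have "\<dots> = mult (mult x y) (star y)" by (simp add: ax(13) ax(12) ax(5))
    also have "\<dots> \<le> mult (lact a top) top" by (rule mult_mono[OF xy]) simp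
    also have "\<dots> \<le> lact a top" unfolding ax(8) by (rule lact_mono) simp_all
    finally have le: "ract x ?c \<le> lact a top" .
    show "p \<in> tens lact ract (lact a top) top"
      unfolding in_tens pe
    proof (intro allI impI)
      fix S assume S: "tensA_closed lact ract S" "(lact a top, top) \<in> S"
      have "(ract x ?c, y) \<in> S" using closedD(1)[OF S(1) S(2) le] by simp
      then have "(x, lact ?c y) \<in> S" using closedD(2)[OF S(1)] by blast
      then show "(x, y) \<in> S" by (simp add: sax(4))
    qed
  qed
qed



lemma rm: "m_star lact ract mult (ract top a) = tens lact ract top (ract top a)"
proof
  have "mult top (ract top a) \<le> ract top a"
    unfolding ax(10)[symmetric] by (rule ract_mono) simp_all
  then show "tens lact ract top (ract top a) \<subseteq> m_star lact ract mult (ract top a)"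
    using tens_sub_D m_star_D by simp
next
  show "m_star lact ract mult (ract top a) \<subseteq> tens lact ract top (ract top a)"
  proof
    fix p assume "p \<in> m_star lact ract mult (ract top a)"
    then obtain x y where pe: "p = (x, y)" and xy: "mult x y \<le> ract top a"
      by (auto simp: m_star_D D_def)
    let ?c = "supp (star x)"
    have "lact ?c y \<le> mult (mult (star x) x) y" using sax(3)[of "star x" y] by (simp add: ax(12))
    also have "\<dots> = mult (star x) (mult x y)" by (simp add: ax(5))
    also have "\<dots> \<le> mult top (ract top a)" by (rule mult_mono[OF _ xy]) simp
    also have "\<dots> \<le> ract top a" unfolding ax(10)[symmetric] by (rule ract_mono) simp_all
    finally have le: "lact ?c y \<le> ract top a" .
    have xe: "ract x ?c = x" by (metis ax(12) sax(4) star_lact)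
    show "p \<in> tens lact ract top (ract top a)"
      unfolding in_tens pe
    proof (intro allI impI)
      fix S assume S: "tensA_closed lact ract S" "(top, ract top a) \<in> S"
      have "(x, lact ?c y) \<in> S" using closedD(1)[OF S(1) S(2) _ le] by simp
      then have "(ract x ?c, y) \<in> S" using closedD(2)[OF S(1)] by blast
      then show "(x, y) \<in> S" by (simp add: xe)
    qed
  qed
qed



lemma twist: "m_star lact ract mult (star a) = twist_star lact ract star (m_star lact ract mult a)"
proof -
  have "{tens lact ract (star y) (star x) | x y. (x, y) \<in> m_star lact ract mult a}
      = {tens lact ract x y | x y. mult x y \<le> star a}"
  proof (intro set_eqI iffI)
    fix t assume "t \<in> {tens lact ract (star y) (star x) | x y. (x, y) \<in> m_star lact ract mult a}"
    then obtain x y where tt: "t = tens lact ract (star y) (star x)" "mult x y \<le> a"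
      by (auto simp: m_star_D D_def)
    from tt(2) have "star (mult x y) \<le> star a" by (rule star_mono)
    then have "mult (star y) (star x) \<le> star a" by (simp add: ax(13))
    then show "t \<in> {tens lact ract x y | x y. mult x y \<le> star a}"
      using tt(1) by blast
  next
    fix t assume "t \<in> {tens lact ract x y | x y. mult x y \<le> star a}"
    then obtain x y where t: "t = tens lact ract x y" "mult x y \<le> star a" by blast
    then have "star (mult x y) \<le> a" by (simp add: star_le_iff)
    then have "mult (star y) (star x) \<le> a" by (simp add: ax(13))
    then have "(star y, star x) \<in> m_star lact ract mult a" by (simp add: m_star_D D_def)
    then show "t \<in> {tens lact ract (star y) (star x) | x y. (x, y) \<in> m_star lact ract mult a}"
    proof -
      have "t = tens lact ract (star (star x)) (star (star y))" by (simp add: t(1) ax(12))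
      then show ?thesis using \<open>(star y, star x) \<in> _\<close> by blast
    qed
  qed
  then show ?thesis unfolding twist_star_def m_star_def by simp
qed



lemma assoc: "m_id_star lact ract mult (m_star lact ract mult a)
           = id_m_star lact ract mult (m_star lact ract mult a)"
proof -
  have "{tens3 lact ract u v y | u v y. \<exists>x. (x, y) \<in> m_star lact ract mult a \<and> mult u v \<le> x}
     = {tens3 lact ract u v y | u v y. mult (mult u v) y \<le> a}"
  proof (intro set_eqI iffI)
    fix t assume "t \<in> {tens3 lact ract u v y | u v y. \<exists>x. (x, y) \<in> m_star lact ract mult a \<and> mult u v \<le> x}"
    then obtain u v y x where t: "t = tens3 lact ract u v y" "mult x y \<le> a" "mult u v \<le> x"
      by (auto simp: m_star_D D_def)
    have "mult (mult u v) y \<le> mult x y" using t(3) mult_mono by blast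
    then have "mult (mult u v) y \<le> a" using t(2) by (rule order_trans)
    with t(1) show "t \<in> {tens3 lact ract u v y | u v y. mult (mult u v) y \<le> a}" by blast
  next
    fix t assume "t \<in> {tens3 lact ract u v y | u v y. mult (mult u v) y \<le> a}"
    then obtain u v y where t: "t = tens3 lact ract u v y" "mult (mult u v) y \<le> a" by blast
    then have "(mult u v, y) \<in> m_star lact ract mult a" by (simp add: m_star_D D_def)
    with t show "t \<in> {tens3 lact ract u v y | u v y. \<exists>x. (x, y) \<in> m_star lact ract mult a \<and> mult u v \<le> x}"
      by blast
  qed
  moreover have "{tens3 lact ract x u v | x u v. \<exists>y. (x, y) \<in> m_star lact ract mult a \<and> mult u v \<le> y}
     = {tens3 lact ract u v y | u v y. mult (mult u v) y \<le> a}"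
  proof (intro set_eqI iffI)
    fix t assume "t \<in> {tens3 lact ract x u v | x u v. \<exists>y. (x, y) \<in> m_star lact ract mult a \<and> mult u v \<le> y}"
    then obtain x u v y where t: "t = tens3 lact ract x u v" "mult x y \<le> a" "mult u v \<le> y"
      by (auto simp: m_star_D D_def)
    have "mult (mult x u) v \<le> mult x y" using t(3) mult_mono by (simp add: ax(5))
    then have "mult (mult x u) v \<le> a" using t(2) by (rule order_trans)
    with t(1) show "t \<in> {tens3 lact ract u v y | u v y. mult (mult u v) y \<le> a}" by blast
  next
    fix t assume "t \<in> {tens3 lact ract u v y | u v y. mult (mult u v) y \<le> a}"
    then obtain u v y where t: "t = tens3 lact ract u v y" "mult (mult u v) y \<le> a" by blast
    then have "(u, mult v y) \<in> m_star lact ract mult a" by (simp add: m_star_D D_def ax(5))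
    with t show "t \<in> {tens3 lact ract x u v | x u v. \<exists>y. (x, y) \<in> m_star lact ract mult a \<and> mult u v \<le> y}"
      by blast
  qed
  ultimately show ?thesis unfolding m_id_star_def id_m_star_def by simp
qed



lemma muA_radj_D: "muA_radj lact ract mult a = D a"
proof -
  have iff: "tensA_closed lact ract S \<and> muA mult S \<le> a \<longleftrightarrow> tensA_closed lact ract S \<and> S \<subseteq> D a" for S
    unfolding muA_def D_def by (auto simp: Sup_le_iff)
  have U: "\<Union>{S. tensA_closed lact ract S \<and> S \<subseteq> D a} = D a"
    using D_closed by blast
  show ?thesis unfolding muA_radj_def iff tjoin_def U using D_closed by blast
qed



lemma d_hom: "frame_hom (d_star lact)"
  unfolding frame_hom_def d_star_def
proof (intro conjI allI)
  show "lact (Sup S) top = Sup ((\<lambda>a. lact a top) ` S)" for S by (simp add: ax(1))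
  show "lact (inf x y) top = inf (lact x top) (lact y top)" for x y
    by (simp add: ax(4) ax(15))
  show "lact top top = top" by (simp add: ax(3))
qed



lemma star_hom: "frame_hom star"
  unfolding frame_hom_def
proof (intro conjI allI)
  show "star (Sup S) = Sup (star ` S)" for S by (simp add: ax(11))
  show "star (inf x y) = inf (star x) (star y)" for x y
  proof (rule antisym)
    show "star (inf x y) \<le> inf (star x) (star y)" by (simp add: star_mono)
    have "star (inf (star x) (star y)) \<le> inf x y"
      by (metis ax(12) inf_le1 inf_le2 le_inf_iff star_mono)
    then show "inf (star x) (star y) \<le> star (inf x y)" by (metis ax(12) star_le_iff)
  qed
  show "star top = top" by (rule star_top)
qed



lemma d_open: "open_frame_hom (d_star lact)"
  unfolding open_frame_hom_def d_star_def
proof (intro exI[of _ supp] conjI allI)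
  fix x a
  show "supp x \<le> a \<longleftrightarrow> x \<le> lact a top"
  proof
    assume "supp x \<le> a"
    then have "lact (supp x) x \<le> lact a top" by (simp add: lact_mono)
    then show "x \<le> lact a top" by (simp add: sax(4))
  next
    assume "x \<le> lact a top"
    then have "supp x \<le> supp (lact a top)" by (rule supp_mono)
    then show "supp x \<le> a" by (simp add: sax(5))
  qed
  have "inf x (lact a top) = lact a x" by (metis ax(15) inf.commute inf_top_left)
  then show "supp (inf x (lact a top)) = inf (supp x) a" by (simp add: sax(5) inf.commute)
qed



end

theorem theorem4p20:
  fixes lact :: "'a::complete_lattice \<Rightarrow> 'q::complete_lattice \<Rightarrow> 'q"
    and ract :: "'q \<Rightarrow> 'a \<Rightarrow> 'q"
    and mult :: "'q \<Rightarrow> 'q \<Rightarrow> 'q"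
    and star :: "'q \<Rightarrow> 'q"
    and supp :: "'q \<Rightarrow> 'a"
  assumes bqf: "based_quantal_frame lact ract mult star"
    and mult_Q: "multiplicative lact ract mult"
    and eq_supp: "equivariant_support lact mult star supp"
  shows
    \<comment> \<open>d, i are locale maps (inverse images are frame homomorphisms)\<close>
    "frame_hom (d_star lact) \<and> frame_hom star \<and>
     \<comment> \<open>m is a locale map G_2 \<rightarrow> G_1: m^* : Q \<rightarrow> Q \<otimes>_A Q is a frame homomorphism\<close>
     (\<forall>F. m_star lact ract mult (Sup F) = tjoin lact ract (m_star lact ract mult ` F)) \<and>
     (\<forall>x y. m_star lact ract mult (inf x y) = m_star lact ract mult x \<inter> m_star lact ract mult y) \<and>
     m_star lact ract mult top = UNIV \<and>
     \<comment> \<open>d \<circ> m = d \<circ> \<pi>_1 and r \<circ> m = r \<circ> \<pi>_2\<close>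
     (\<forall>a. m_star lact ract mult (d_star lact a) = pi1_star lact ract (d_star lact a)) \<and>
     (\<forall>a. m_star lact ract mult (r_star lact star a) = pi2_star lact ract (r_star lact star a)) \<and>
     \<comment> \<open>associativity: m \<circ> (m \<times> id) = m \<circ> (id \<times> m)\<close>
     (\<forall>a. m_id_star lact ract mult (m_star lact ract mult a)
           = id_m_star lact ract mult (m_star lact ract mult a)) \<and>
     \<comment> \<open>i is an involution (i \<circ> i = id, d \<circ> i = r) reversing composition: i \<circ> m = m \<circ> \<langle>i\<pi>_2, i\<pi>_1\<rangle>\<close>
     (\<forall>x. star (star x) = x) \<and>
     r_star lact star = star \<circ> d_star lact \<and>
     (\<forall>a. m_star lact ract mult (star a) = twist_star lact ract star (m_star lact ract mult a)) \<and>
     \<comment> \<open>d is open\<close>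
     open_frame_hom (d_star lact)"
proof -
  interpret B: BQF lact ract mult star supp using bqf eq_supp by unfold_locales
  have mD: "\<And>a. m_star lact ract mult a = B.D a" by (rule B.m_star_D)
  have sup: "\<forall>F. m_star lact ract mult (Sup F) = tjoin lact ract (m_star lact ract mult ` F)"
  proof
    fix F
    have "m_star lact ract mult (Sup F) = muA_radj lact ract mult (Sup F)" by (simp add: mD B.muA_radj_D)
    also have "\<dots> = tjoin lact ract (muA_radj lact ract mult ` F)" using mult_Q unfolding multiplicative_def by blast
    also have "muA_radj lact ract mult ` F = m_star lact ract mult ` F" by (simp add: mD B.muA_radj_D)
    finally show "m_star lact ract mult (Sup F) = tjoin lact ract (m_star lact ract mult ` F)" .
  qed
  have rr: "\<And>a. r_star lact star a = ract top a"
    by (simp add: r_star_def d_star_def B.star_lact B.star_top)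
  show ?thesis
    using B.d_hom B.star_hom sup B.dm B.rm B.assoc B.ax(12) B.twist B.d_open
    by (simp add: mD B.D_def rr d_star_def pi1_star_def pi2_star_def r_star_def[symmetric] set_eq_iff)
qed

end
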